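(* For every positive integer $n$, there exists a semigroup $S$ with a left ideal $A$ such that $\mathrm{H}_{\mathcal{R}}(S)=n$ and $\mathrm{H}_{\mathcal{R}}(A)=2n$.
   Context: A left ideal of $S$ is a non-empty subset $A$ with $SA\subseteq A$. Green's preorder on a semigroup $M$: $u\leq_{\mathcal{R}} v$ iff $uM^1\subseteq vM^1$, where $M^1$ is $M$ with an identity adjoined if necessary; $\mathcal{R}$ is the associated equivalence; the $\mathcal{R}$-height $\mathrm{H}_{\mathcal{R}}(M)$ is the supremum of the cardinalities of chains in the poset of $\mathcal{R}$-classes. $\mathrm{H}_{\mathcal{R}}(A)$ is computed in $A$ as a semigroup. *)

theory Defs
  imports Main "HOL-Library.Extended_Nat"
begin

definition semigroup_on :: "'a set \<Rightarrow> ('a \<Rightarrow> 'a \<Rightarrow> 'a) \<Rightarrow> bool" where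
  "semigroup_on M f \<longleftrightarrow>
     (\<forall>x\<in>M. \<forall>y\<in>M. f x y \<in> M) \<and>
     (\<forall>x\<in>M. \<forall>y\<in>M. \<forall>z\<in>M. f (f x y) z = f x (f y z))"

definition left_ideal :: "'a set \<Rightarrow> ('a \<Rightarrow> 'a \<Rightarrow> 'a) \<Rightarrow> 'a set \<Rightarrow> bool" where
  "left_ideal S f A \<longleftrightarrow> A \<noteq> {} \<and> A \<subseteq> S \<and> (\<forall>s\<in>S. \<forall>a\<in>A. f s a \<in> A)"

definition right_principal :: "'a set \<Rightarrow> ('a \<Rightarrow> 'a \<Rightarrow> 'a) \<Rightarrow> 'a \<Rightarrow> 'a set" where
  "right_principal M f u = insert u (f u ` M)"

definition R_le :: "'a set \<Rightarrow> ('a \<Rightarrow> 'a \<Rightarrow> 'a) \<Rightarrow> 'a \<Rightarrow> 'a \<Rightarrow> bool" where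
  "R_le M f u v \<longleftrightarrow> u \<in> M \<and> v \<in> M \<and> right_principal M f u \<subseteq> right_principal M f v"

definition R_class :: "'a set \<Rightarrow> ('a \<Rightarrow> 'a \<Rightarrow> 'a) \<Rightarrow> 'a \<Rightarrow> 'a set" where
  "R_class M f u = {v \<in> M. R_le M f u v \<and> R_le M f v u}"

definition R_classes :: "'a set \<Rightarrow> ('a \<Rightarrow> 'a \<Rightarrow> 'a) \<Rightarrow> 'a set set" where
  "R_classes M f = R_class M f ` M"

definition R_class_le :: "'a set \<Rightarrow> ('a \<Rightarrow> 'a \<Rightarrow> 'a) \<Rightarrow> 'a set \<Rightarrow> 'a set \<Rightarrow> bool" where
  "R_class_le M f X Y \<longleftrightarrow> (\<exists>u\<in>X. \<exists>v\<in>Y. R_le M f u v)"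

definition R_chain :: "'a set \<Rightarrow> ('a \<Rightarrow> 'a \<Rightarrow> 'a) \<Rightarrow> 'a set set \<Rightarrow> bool" where
  "R_chain M f K \<longleftrightarrow> K \<subseteq> R_classes M f \<and>
     (\<forall>X\<in>K. \<forall>Y\<in>K. R_class_le M f X Y \<or> R_class_le M f Y X)"

definition R_height :: "'a set \<Rightarrow> ('a \<Rightarrow> 'a \<Rightarrow> 'a) \<Rightarrow> enat" where
  "R_height M f = Sup ((\<lambda>K. if finite K then enat (card K) else \<infinity>) ` {K. R_chain M f K})"

end

theory Submission
  imports Defs "HOL-Library.Infinite_Set" "HOL-Library.Countable_Set"
begin

lemma height_by_rank:
  fixes rk :: "'a \<Rightarrow> nat"
  assumes rp: "\<And>u. u \<in> M \<Longrightarrow> right_principal M f u = {v \<in> M. rk v \<le> rk u}"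
    and fin: "finite (rk ` M)"
  shows "R_height M f = enat (card (rk ` M))"
proof -
  have le: "R_le M f u v \<longleftrightarrow> rk u \<le> rk v" if "u \<in> M" "v \<in> M" for u v
  proof
    assume "R_le M f u v"
    then have "right_principal M f u \<subseteq> right_principal M f v" by (simp add: R_le_def)
    moreover have "u \<in> right_principal M f u" using rp[OF \<open>u \<in> M\<close>] \<open>u \<in> M\<close> by simp
    ultimately show "rk u \<le> rk v" using rp[OF \<open>v \<in> M\<close>] by auto
  next
    assume "rk u \<le> rk v"
    then show "R_le M f u v" using that rp[of u] rp[of v] by (auto simp: R_le_def)
  qed
  have cls: "R_class M f u = {v \<in> M. rk v = rk u}" if "u \<in> M" for u
    using le that by (auto simp: R_class_def)
  define F where "F i = {v \<in> M. rk v = i}" for i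
  have classes: "R_classes M f = F ` (rk ` M)"
    unfolding R_classes_def F_def using cls by (auto simp: image_iff)
  have inj: "inj_on F (rk ` M)"
    unfolding inj_on_def F_def by blast
  have cardc: "card (R_classes M f) = card (rk ` M)"
    using classes inj by (simp add: card_image)
  have finc: "finite (R_classes M f)" using classes fin by simp
  have chain: "R_chain M f (R_classes M f)"
    unfolding R_chain_def
  proof (intro conjI ballI)
    fix X Y assume "X \<in> R_classes M f" "Y \<in> R_classes M f"
    then obtain u v where uv: "u \<in> M" "v \<in> M" "X = R_class M f u" "Y = R_class M f v"
      by (auto simp: R_classes_def)
    have ux: "u \<in> X" "v \<in> Y" using uv cls by auto
    show "R_class_le M f X Y \<or> R_class_le M f Y X"
    proof (cases "rk u \<le> rk v")
      case True
      then show ?thesis using ux uv le by (auto simp: R_class_le_def)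
    next
      case False
      then have "R_le M f v u" using le uv by simp
      then show ?thesis using ux unfolding R_class_le_def by blast
    qed
  qed simp
  let ?g = "\<lambda>K. if finite K then enat (card K) else \<infinity>"
  have "R_height M f = Sup (?g ` {K. R_chain M f K})" by (simp add: R_height_def)
  also have "\<dots> = enat (card (rk ` M))"
  proof (rule antisym)
    show "Sup (?g ` {K. R_chain M f K}) \<le> enat (card (rk ` M))"
    proof (rule Sup_least)
      fix x assume "x \<in> ?g ` {K. R_chain M f K}"
      then obtain K where K: "R_chain M f K" "x = ?g K" by auto
      have sub: "K \<subseteq> R_classes M f" using K by (simp add: R_chain_def)
      then have "finite K" using finc finite_subset by blast
      moreover have "card K \<le> card (R_classes M f)" using sub finc card_mono by blast
      ultimately show "x \<le> enat (card (rk ` M))" using K cardc by simp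
    qed
    show "enat (card (rk ` M)) \<le> Sup (?g ` {K. R_chain M f K})"
    proof -
      have "?g (R_classes M f) \<in> ?g ` {K. R_chain M f K}" using chain by blast
      then have "?g (R_classes M f) \<le> Sup (?g ` {K. R_chain M f K})" by (rule Sup_upper)
      then show ?thesis using finc cardc by simp
    qed
  qed
  finally show ?thesis .
qed

section \<open>Transfer along an injection\<close>

definition tr_op :: "'a set \<Rightarrow> ('a \<Rightarrow> 'b) \<Rightarrow> ('a \<Rightarrow> 'a \<Rightarrow> 'a) \<Rightarrow> 'b \<Rightarrow> 'b \<Rightarrow> 'b" where
  "tr_op M h f x y = h (f (inv_into M h x) (inv_into M h y))"

lemma tr_op_h:
  assumes "inj_on h M" "u \<in> M" "v \<in> M"
  shows "tr_op M h f (h u) (h v) = h (f u v)"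
  using assms by (simp add: tr_op_def)

lemma tr_semigroup:
  assumes sg: "semigroup_on M f" and inj: "inj_on h M"
  shows "semigroup_on (h ` M) (tr_op M h f)"
proof -
  have cl: "\<And>x y. x \<in> M \<Longrightarrow> y \<in> M \<Longrightarrow> f x y \<in> M" using sg by (simp add: semigroup_on_def)
  have as: "\<And>x y z. x \<in> M \<Longrightarrow> y \<in> M \<Longrightarrow> z \<in> M \<Longrightarrow> f (f x y) z = f x (f y z)"
    using sg by (simp add: semigroup_on_def)
  show ?thesis
    unfolding semigroup_on_def
    using cl as by (auto simp: tr_op_h[OF inj])
qed

lemma tr_left_ideal:
  assumes li: "left_ideal M f A" and inj: "inj_on h M"
  shows "left_ideal (h ` M) (tr_op M h f) (h ` A)"
proof -
  have sub: "A \<subseteq> M" using li by (simp add: left_ideal_def)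
  show ?thesis using li sub unfolding left_ideal_def
    by (auto simp: tr_op_h[OF inj] subsetD)
qed

lemma tr_height:
  fixes rk :: "'a \<Rightarrow> nat"
  assumes sub: "A \<subseteq> M" and inj: "inj_on h M"
    and rp: "\<And>u. u \<in> A \<Longrightarrow> right_principal A f u = {v \<in> A. rk v \<le> rk u}"
    and fin: "finite (rk ` A)"
  shows "R_height (h ` A) (tr_op M h f) = enat (card (rk ` A))"
proof -
  define rk' where "rk' = rk \<circ> inv_into M h"
  have rk'h: "rk' (h u) = rk u" if "u \<in> A" for u
    using that sub inj by (auto simp: rk'_def)
  have img: "rk' ` h ` A = rk ` A"
    using rk'h by (force simp: image_iff)
  have rp': "right_principal (h ` A) (tr_op M h f) u' = {v \<in> h ` A. rk' v \<le> rk' u'}"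
    if u'A: "u' \<in> h ` A" for u'
  proof -
    obtain u where u: "u \<in> A" "u' = h u" using u'A by auto
    have "right_principal (h ` A) (tr_op M h f) (h u) = insert (h u) ((\<lambda>w. h (f u w)) ` A)"
      unfolding right_principal_def using u sub
      by (auto simp: tr_op_h[OF inj] subsetD image_iff)
    also have "\<dots> = h ` right_principal A f u"
      by (auto simp: right_principal_def)
    also have "\<dots> = {v \<in> h ` A. rk' v \<le> rk' (h u)}"
      using rp[OF u(1)] rk'h u by auto
    finally show ?thesis using u by simp
  qed
  have "R_height (h ` A) (tr_op M h f) = enat (card (rk' ` h ` A))"
    by (rule height_by_rank[OF rp']) (use fin img in auto)
  then show ?thesis using img by simp
qed

section \<open>A countable right simple semigroup of injections (Baer--Levi type)\<close>

definition BL :: "(nat \<Rightarrow> nat) set" where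
  "BL = {f. inj f \<and> infinite (- range f)}"

lemma BL_comp:
  assumes "f \<in> BL" "g \<in> BL" shows "g \<circ> f \<in> BL"
proof -
  have i: "inj (g \<circ> f)" using assms by (auto simp: BL_def intro: inj_compose)
  have s: "- range g \<subseteq> - range (g \<circ> f)" by auto
  have "infinite (- range g)" using assms(2) by (simp add: BL_def)
  then have "infinite (- range (g \<circ> f))" using infinite_super[OF s] by blast
  then show ?thesis using i by (simp add: BL_def)
qed

lemma BL_wit:
  assumes u: "u \<in> BL" and v: "v \<in> BL"
  shows "\<exists>s\<in>BL. s \<circ> u = v"
proof -
  have iu: "inj u" and iv: "inj v" and infv: "infinite (- range v)" using u v by (auto simp: BL_def)
  define e where "e = enumerate (- range v)"
  have sm: "strict_mono e" unfolding e_def using infv by (rule strict_mono_enumerate)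
  have ie: "inj e" using sm by (rule strict_mono_imp_inj_on)
  have ein: "e n \<notin> range v" for n unfolding e_def using enumerate_in_set[OF infv] by auto
  define s where "s y = (if y \<in> range u then v (inv u y) else e (2 * y))" for y
  have "inj s"
  proof (rule injI)
    fix x y assume eq: "s x = s y"
    show "x = y"
    proof (cases "x \<in> range u")
      case True
      show ?thesis
      proof (cases "y \<in> range u")
        case True
        with \<open>x \<in> range u\<close> eq have "v (inv u x) = v (inv u y)" by (simp add: s_def)
        then have "inv u x = inv u y" using iv by (simp add: inj_eq)
        moreover have "x = u (inv u x)" using \<open>x \<in> range u\<close> by (simp add: f_inv_into_f)
        moreover have "y = u (inv u y)" using True by (simp add: f_inv_into_f)
        ultimately show ?thesis by simp
      next
        case False
        with \<open>x \<in> range u\<close> eq have "v (inv u x) = e (2 * y)" by (simp add: s_def)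
        then show ?thesis using ein[of "2 * y"] by (metis rangeI)
      qed
    next
      case False
      show ?thesis
      proof (cases "y \<in> range u")
        case True
        with \<open>x \<notin> range u\<close> eq have "e (2 * x) = v (inv u y)" by (simp add: s_def)
        then show ?thesis using ein[of "2 * x"] by (metis rangeI)
      next
        case False
        with \<open>x \<notin> range u\<close> eq have "e (2 * x) = e (2 * y)" by (simp add: s_def)
        then show ?thesis using ie by (simp add: inj_eq)
      qed
    qed
  qed
  moreover have "infinite (- range s)"
  proof -
    have sub: "range (\<lambda>k. e (2 * k + 1)) \<subseteq> - range s"
    proof
      fix z assume "z \<in> range (\<lambda>k. e (2 * k + 1))"
      then obtain k where z: "z = e (2 * k + 1)" by auto
      have "s y \<noteq> z" for y
      proof (cases "y \<in> range u")
        case True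
        then have "s y \<in> range v" by (simp add: s_def)
        then show ?thesis using ein[of "2 * k + 1"] z by auto
      next
        case False
        then have "s y = e (2 * y)" by (simp add: s_def)
        moreover have "e (2 * y) \<noteq> e (2 * k + 1)"
        proof
          assume "e (2 * y) = e (2 * k + 1)"
          then have "2 * y = 2 * k + 1" using ie by (simp add: inj_eq)
          then show False by presburger
        qed
        ultimately show ?thesis using z by simp
      qed
      then show "z \<in> - range s" by auto
    qed
    have "inj (\<lambda>k. e (2 * k + 1))"
    proof (rule injI)
      fix a b assume "e (2 * a + 1) = e (2 * b + 1)"
      then have "2 * a + 1 = 2 * b + 1" using ie by (simp add: inj_eq)
      then show "a = b" by simp
    qed
    then have "infinite (range (\<lambda>k. e (2 * k + 1)))" by (rule range_inj_infinite)
    then show ?thesis using infinite_super[OF sub] by blast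
  qed
  moreover have "s \<circ> u = v"
    by (rule ext) (simp add: s_def iu)
  ultimately show ?thesis unfolding BL_def by blast
qed

definition wit :: "(nat \<Rightarrow> nat) \<Rightarrow> (nat \<Rightarrow> nat) \<Rightarrow> (nat \<Rightarrow> nat)" where
  "wit u v = (SOME s. s \<in> BL \<and> s \<circ> u = v)"

lemma wit_prop:
  assumes "u \<in> BL" "v \<in> BL" shows "wit u v \<in> BL \<and> wit u v \<circ> u = v"
proof -
  have "\<exists>s. s \<in> BL \<and> s \<circ> u = v" using BL_wit[OF assms] by blast
  then show ?thesis unfolding wit_def by (rule someI_ex)
qed

definition a0 :: "nat \<Rightarrow> nat" where "a0 k = 2 * k"

lemma a0_BL: "a0 \<in> BL"
proof -
  have "inj a0" by (auto simp: inj_def a0_def)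
  moreover have "range (\<lambda>k. 2 * k + 1) \<subseteq> - range a0" by (auto simp: a0_def) presburger
  moreover have "infinite (range (\<lambda>k::nat. 2 * k + 1))"
    by (rule range_inj_infinite) (auto simp: inj_def)
  ultimately have "infinite (- range a0)" using infinite_super by blast
  then show ?thesis using \<open>inj a0\<close> by (simp add: BL_def)
qed

fun H :: "nat \<Rightarrow> (nat \<Rightarrow> nat) set" where
  "H 0 = {a0}"
| "H (Suc k) = H k \<union> (\<lambda>(f, g). g \<circ> f) ` (H k \<times> H k) \<union> (\<lambda>(u, v). wit u v) ` (H k \<times> H k)"

definition TT :: "(nat \<Rightarrow> nat) set" where "TT = (\<Union>k. H k)"

lemma H_BL: "H k \<subseteq> BL"
proof (induction k)
  case 0
  then show ?case using a0_BL by simp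
next
  case (Suc k)
  have "\<forall>a\<in>H k. \<forall>b\<in>H k. b \<circ> a \<in> BL \<and> wit a b \<in> BL"
    using Suc BL_comp wit_prop by blast
  then show ?case using Suc by auto
qed

lemma H_mono: "k \<le> m \<Longrightarrow> H k \<subseteq> H m"
  by (induction m) (auto simp: le_Suc_eq)

lemma H_finite: "finite (H k)"
  by (induction k) auto

lemma TT_BL: "TT \<subseteq> BL" using H_BL by (auto simp: TT_def)

lemma TT_countable: "countable TT"
  unfolding TT_def by (intro countable_UN) (auto intro: countable_finite H_finite)

lemma a0_TT: "a0 \<in> TT" unfolding TT_def by (auto intro: exI[of _ 0])

lemma TT_two:
  assumes "f \<in> TT" "g \<in> TT"
  obtains k where "f \<in> H k" "g \<in> H k"
proof -
  obtain i j where "f \<in> H i" "g \<in> H j" using assms by (auto simp: TT_def)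
  then have "f \<in> H (max i j)" "g \<in> H (max i j)" using H_mono[of i "max i j"] H_mono[of j "max i j"] by auto
  then show ?thesis using that by blast
qed

lemma TT_comp: assumes "f \<in> TT" "g \<in> TT" shows "g \<circ> f \<in> TT"
proof -
  obtain k where "f \<in> H k" "g \<in> H k" using TT_two[OF assms] by blast
  then have "g \<circ> f \<in> (\<lambda>(f, g). g \<circ> f) ` (H k \<times> H k)"
    by (intro image_eqI[where x = "(f, g)"]) simp_all
  then have "g \<circ> f \<in> H (Suc k)" by simp
  then show ?thesis unfolding TT_def by (rule UN_I[OF UNIV_I])
qed

lemma TT_rs: assumes "x \<in> TT" "y \<in> TT" shows "\<exists>t\<in>TT. t \<circ> x = y"
proof -
  obtain k where "x \<in> H k" "y \<in> H k" using TT_two[OF assms] by blast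
  then have "wit x y \<in> (\<lambda>(u, v). wit u v) ` (H k \<times> H k)"
    by (intro image_eqI[where x = "(x, y)"]) simp_all
  then have "wit x y \<in> H (Suc k)" by simp
  then have "wit x y \<in> TT" unfolding TT_def by (rule UN_I[OF UNIV_I])
  moreover have "wit x y \<circ> x = y" using wit_prop assms TT_BL by blast
  ultimately show ?thesis by blast
qed

lemma TT_a0: assumes "t \<in> TT" shows "a0 \<circ> t \<noteq> a0"
proof
  assume eq: "a0 \<circ> t = a0"
  have "t k = k" for k using fun_cong[OF eq, of k] by (simp add: a0_def)
  then have "range t = UNIV" by (metis surj_def)
  then show False using assms TT_BL by (auto simp: BL_def)
qed

type_synonym elem = "(nat \<Rightarrow> nat) \<times> bool \<times> nat"

fun mulM :: "elem \<Rightarrow> elem \<Rightarrow> elem" where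
  "mulM (x, r, k) (y, s, l) =
     (if k = l then (y \<circ> x, s, k) else if k < l then (x, False, k) else (y, s, l))"

definition MM :: "nat \<Rightarrow> elem set" where
  "MM n = TT \<times> UNIV \<times> {1..n}"

definition Ap :: "(nat \<Rightarrow> nat) set" where
  "Ap = insert a0 ((\<lambda>t. a0 \<circ> t) ` TT)"

definition AA :: "nat \<Rightarrow> elem set" where
  "AA n = {u \<in> MM n. \<not> fst (snd u) \<or> fst u \<in> Ap}"

fun rkS :: "elem \<Rightarrow> nat" where
  "rkS (x, r, k) = k"

fun rkA :: "elem \<Rightarrow> nat" where
  "rkA (x, r, k) = 2 * k + (if r \<and> x = a0 then 1 else 0)"

lemma Ap_TT: "Ap \<subseteq> TT"
  unfolding Ap_def using a0_TT TT_comp by auto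

lemma Ap_left: assumes "t \<in> TT" "y \<in> Ap" shows "y \<circ> t \<in> Ap"
proof -
  from assms(2) consider "y = a0" | t' where "t' \<in> TT" "y = a0 \<circ> t'" by (auto simp: Ap_def)
  then show ?thesis
  proof cases
    case 1
    then show ?thesis using assms(1) by (auto simp: Ap_def)
  next
    case 2
    then have "y \<circ> t = a0 \<circ> (t' \<circ> t)" by (simp add: comp_assoc)
    moreover have "t' \<circ> t \<in> TT" using TT_comp 2 assms(1) by blast
    ultimately show ?thesis by (auto simp: Ap_def)
  qed
qed

lemma mulM_assoc: "mulM (mulM u v) w = mulM u (mulM v w)"
proof -
  obtain x r k where u: "u = (x, r, k)" by (cases u) auto
  obtain y s l where v: "v = (y, s, l)" by (cases v) auto
  obtain z t m where w: "w = (z, t, m)" by (cases w) auto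
  show ?thesis unfolding u v w by (auto simp: comp_assoc)
qed

lemma mulM_closed: assumes "u \<in> MM n" "v \<in> MM n" shows "mulM u v \<in> MM n"
proof -
  obtain x r k where u: "u = (x, r, k)" by (cases u) auto
  obtain y s l where v: "v = (y, s, l)" by (cases v) auto
  show ?thesis using assms TT_comp unfolding u v by (auto simp: MM_def)
qed

lemma semigroup_MM: "semigroup_on (MM n) mulM"
  unfolding semigroup_on_def using mulM_closed mulM_assoc by blast

lemma AA_sub: "AA n \<subseteq> MM n" by (auto simp: AA_def)

lemma left_ideal_AA: assumes "n > 0" shows "left_ideal (MM n) mulM (AA n)"
proof -
  have "(a0, False, 1) \<in> AA n" using assms a0_TT by (auto simp: AA_def MM_def)
  moreover have "mulM u w \<in> AA n" if "u \<in> MM n" "w \<in> AA n" for u w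
  proof -
    obtain y s l where u: "u = (y, s, l)" by (cases u) auto
    obtain x r k where w: "w = (x, r, k)" by (cases w) auto
    have wm: "w \<in> MM n" using that AA_sub by blast
    have mm: "mulM u w \<in> MM n" using mulM_closed that(1) wm by blast
    have "\<not> fst (snd (mulM u w)) \<or> fst (mulM u w) \<in> Ap"
      using that Ap_left unfolding u w by (auto simp: AA_def MM_def)
    then show ?thesis using mm by (simp add: AA_def)
  qed
  ultimately show ?thesis unfolding left_ideal_def using AA_sub by blast
qed

lemma rp_S: assumes "u \<in> MM n"
  shows "right_principal (MM n) mulM u = {v \<in> MM n. rkS v \<le> rkS u}"
proof -
  obtain x r k where u: "u = (x, r, k)" by (cases u) auto
  have x: "x \<in> TT" using assms u by (auto simp: MM_def)
  show ?thesis
  proof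
    show "right_principal (MM n) mulM u \<subseteq> {v \<in> MM n. rkS v \<le> rkS u}"
    proof
      fix v assume "v \<in> right_principal (MM n) mulM u"
      then consider "v = u" | w where "w \<in> MM n" "v = mulM u w" by (auto simp: right_principal_def)
      then show "v \<in> {v \<in> MM n. rkS v \<le> rkS u}"
      proof cases
        case 1 then show ?thesis using assms by simp
      next
        case 2
        obtain y s l where w: "w = (y, s, l)" by (cases w) auto
        show ?thesis using 2 mulM_closed[OF assms 2(1)] unfolding u w by auto
      qed
    qed
  next
    show "{v \<in> MM n. rkS v \<le> rkS u} \<subseteq> right_principal (MM n) mulM u"
    proof
      fix v assume v: "v \<in> {v \<in> MM n. rkS v \<le> rkS u}"
      obtain y s l where vv: "v = (y, s, l)" by (cases v) auto
      have y: "y \<in> TT" and l: "l \<le> k" "l \<in> {1..n}" using v vv u by (auto simp: MM_def)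
      show "v \<in> right_principal (MM n) mulM u"
      proof (cases "l < k")
        case True
        then have "mulM u v = v" unfolding u vv by simp
        then show ?thesis using v by (force simp: right_principal_def)
      next
        case False
        then have lk: "l = k" using l by simp
        obtain t where t: "t \<in> TT" "t \<circ> x = y" using TT_rs[OF x y] by blast
        have "(t, s, k) \<in> MM n" using t l lk by (auto simp: MM_def)
        moreover have "mulM u (t, s, k) = v" unfolding u vv using t lk by simp
        ultimately show ?thesis by (force simp: right_principal_def)
      qed
    qed
  qed
qed

lemma no_a0: assumes "x \<in> TT" "y \<in> Ap" shows "y \<circ> x \<noteq> a0"
proof -
  from assms(2) consider "y = a0" | t' where "t' \<in> TT" "y = a0 \<circ> t'" by (auto simp: Ap_def)
  then show ?thesis
  proof cases
    case 1 then show ?thesis using TT_a0[OF assms(1)] by simp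
  next
    case 2
    then have "y \<circ> x = a0 \<circ> (t' \<circ> x)" by (simp add: comp_assoc)
    moreover have "t' \<circ> x \<in> TT" using TT_comp 2 assms(1) by blast
    ultimately show ?thesis using TT_a0 by simp
  qed
qed

lemma rp_A: assumes "n > 0" "u \<in> AA n"
  shows "right_principal (AA n) mulM u = {v \<in> AA n. rkA v \<le> rkA u}"
proof -
  obtain x r k where u: "u = (x, r, k)" by (cases u) auto
  have x: "x \<in> TT" and k: "k \<in> {1..n}" using assms u by (auto simp: AA_def MM_def)
  have uM: "u \<in> MM n" using assms AA_sub by blast
  have li: "left_ideal (MM n) mulM (AA n)" using left_ideal_AA[OF assms(1)] .
  show ?thesis
  proof
    show "right_principal (AA n) mulM u \<subseteq> {v \<in> AA n. rkA v \<le> rkA u}"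
    proof
      fix v assume "v \<in> right_principal (AA n) mulM u"
      then consider "v = u" | w where "w \<in> AA n" "v = mulM u w" by (auto simp: right_principal_def)
      then show "v \<in> {v \<in> AA n. rkA v \<le> rkA u}"
      proof cases
        case 1 then show ?thesis using assms by simp
      next
        case 2
        obtain y s l where w: "w = (y, s, l)" by (cases w) auto
        have vA: "v \<in> AA n" using li uM 2 unfolding left_ideal_def
        proof -
          have "w \<in> MM n" using 2 AA_sub by blast
          have "mulM u w \<in> AA n"
          proof -
            have "mulM u w \<in> MM n" using mulM_closed uM \<open>w \<in> MM n\<close> by blast
            moreover have "\<not> fst (snd (mulM u w)) \<or> fst (mulM u w) \<in> Ap"
              using 2 Ap_left x unfolding u w by (auto simp: AA_def)
            ultimately show ?thesis by (simp add: AA_def)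
          qed
          then show ?thesis using 2 by simp
        qed
        have wy: "s \<Longrightarrow> y \<in> Ap" using 2 w by (auto simp: AA_def)
        have "rkA v \<le> rkA u"
        proof (cases "l = k")
          case True
          have "\<not> (s \<and> y \<circ> x = a0)" using wy no_a0[OF x] by blast
          then show ?thesis using 2 True unfolding u w by auto
        next
          case False
          then show ?thesis using 2 unfolding u w by auto
        qed
        then show ?thesis using vA by simp
      qed
    qed
  next
    show "{v \<in> AA n. rkA v \<le> rkA u} \<subseteq> right_principal (AA n) mulM u"
    proof
      fix v assume v: "v \<in> {v \<in> AA n. rkA v \<le> rkA u}"
      obtain y s l where vv: "v = (y, s, l)" by (cases v) auto
      have y: "y \<in> TT" and l: "l \<in> {1..n}" and sy: "s \<Longrightarrow> y \<in> Ap"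
        using v vv by (auto simp: AA_def MM_def)
      have rle: "rkA v \<le> rkA u" using v by simp
      have lk: "l \<le> k"
      proof (rule ccontr)
        assume "\<not> l \<le> k"
        then have "2 * k + 1 < 2 * l" by simp
        then show False using rle unfolding u vv by (auto split: if_splits)
      qed
      show "v \<in> right_principal (AA n) mulM u"
      proof (cases "l < k")
        case True
        then have "mulM u v = v" unfolding u vv by simp
        then show ?thesis using v by (force simp: right_principal_def)
      next
        case False
        then have lk: "l = k" using lk by simp
        show ?thesis
        proof (cases "s \<and> y = a0")
          case True
          then have "rkA v = 2 * k + 1" using lk unfolding vv by simp
          then have "r \<and> x = a0" using rle unfolding u by (auto split: if_splits)
          then have "v = u" using True lk unfolding u vv by simp
          then show ?thesis by (simp add: right_principal_def)
        next
          case False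
          show ?thesis
          proof (cases s)
            case False
            obtain t where t: "t \<in> TT" "t \<circ> x = y" using TT_rs[OF x y] by blast
            have "(t, False, k) \<in> AA n" using t l lk by (auto simp: AA_def MM_def)
            moreover have "mulM u (t, False, k) = v" unfolding u vv using t lk False by simp
            ultimately show ?thesis by (force simp: right_principal_def)
          next
            case True
            with \<open>\<not> (s \<and> y = a0)\<close> have "y \<noteq> a0" by simp
            then obtain t0 where t0: "t0 \<in> TT" "y = a0 \<circ> t0" using sy[OF True] by (auto simp: Ap_def)
            obtain t where t: "t \<in> TT" "t \<circ> x = t0" using TT_rs[OF x t0(1)] by blast
            have ap: "a0 \<circ> t \<in> Ap" using t by (auto simp: Ap_def)
            then have "(a0 \<circ> t, True, k) \<in> AA n" using Ap_TT l lk by (auto simp: AA_def MM_def)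
            moreover have "mulM u (a0 \<circ> t, True, k) = v"
              unfolding u vv using t t0 lk True by (simp add: comp_assoc)
            ultimately show ?thesis by (force simp: right_principal_def)
          qed
        qed
      qed
    qed
  qed
qed

lemma countable_MM: "countable (MM n)"
proof -
  have "finite ((UNIV :: bool set) \<times> {1..n})" by simp
  then have "countable ((UNIV :: bool set) \<times> {1..n})" by (rule countable_finite)
  then show ?thesis unfolding MM_def using TT_countable by (intro countable_SIGMA) auto
qed

lemma rkS_img: "rkS ` MM n = {1..n}"
proof
  show "rkS ` MM n \<subseteq> {1..n}" by (auto simp: MM_def)
  show "{1..n} \<subseteq> rkS ` MM n"
  proof
    fix k assume "k \<in> {1..n}"
    then have "(a0, False, k) \<in> MM n" using a0_TT by (auto simp: MM_def)
    then show "k \<in> rkS ` MM n" by (force simp: image_iff)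
  qed
qed

lemma rkA_img: "rkA ` AA n = {2..2 * n + 1}"
proof
  show "rkA ` AA n \<subseteq> {2..2 * n + 1}" by (auto simp: AA_def MM_def)
  show "{2..2 * n + 1} \<subseteq> rkA ` AA n"
  proof
    fix j assume j: "j \<in> {2..2 * n + 1}"
    define k where "k = j div 2"
    have k: "k \<in> {1..n}" using j by (auto simp: k_def)
    have a: "a0 \<in> Ap" by (simp add: Ap_def)
    show "j \<in> rkA ` AA n"
    proof (cases "even j")
      case True
      then have "j = rkA (a0, False, k)" by (simp add: k_def)
      moreover have "(a0, False, k) \<in> AA n" using k a0_TT by (auto simp: AA_def MM_def)
      ultimately show ?thesis by blast
    next
      case False
      then have "j = rkA (a0, True, k)" by (simp add: k_def)
      moreover have "(a0, True, k) \<in> AA n" using k a0_TT a by (auto simp: AA_def MM_def)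
      ultimately show ?thesis by blast
    qed
  qed
qed

theorem corollary4p9:
  fixes n :: nat
  assumes "n > 0"
  shows "\<exists>(S :: nat set) (f :: nat \<Rightarrow> nat \<Rightarrow> nat) A.
           semigroup_on S f \<and> left_ideal S f A \<and>
           R_height S f = enat n \<and> R_height A f = enat (2 * n)"
proof -
  define h where "h = to_nat_on (MM n)"
  have inj: "inj_on h (MM n)" unfolding h_def using countable_MM by (rule inj_on_to_nat_on)
  have 1: "semigroup_on (h ` MM n) (tr_op (MM n) h mulM)"
    using tr_semigroup[OF semigroup_MM inj] .
  have 2: "left_ideal (h ` MM n) (tr_op (MM n) h mulM) (h ` AA n)"
    using tr_left_ideal[OF left_ideal_AA[OF assms] inj] .
  have "R_height (h ` MM n) (tr_op (MM n) h mulM) = enat (card (rkS ` MM n))"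
    by (rule tr_height[OF subset_refl inj rp_S]) (auto simp: rkS_img)
  then have 3: "R_height (h ` MM n) (tr_op (MM n) h mulM) = enat n" by (simp add: rkS_img)
  have "R_height (h ` AA n) (tr_op (MM n) h mulM) = enat (card (rkA ` AA n))"
    by (rule tr_height[OF AA_sub inj rp_A[OF assms]]) (auto simp: rkA_img)
  then have 4: "R_height (h ` AA n) (tr_op (MM n) h mulM) = enat (2 * n)" by (simp add: rkA_img)
  show ?thesis using 1 2 3 4 by blast
qed

end
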